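(* Let $A\subset\mathbf{Z}_{\geq0}$ be finite with $0\in A$, $N=\#A\geq 2$, $A(x)=\sum_{a\in A}x^a$. Suppose $A(x)$ has a spectrum $\{\theta_1,\dots,\theta_{N-1}\}$ with $\theta_1\notin\mathbf{Q}$. Then $A(x)$ has at least $N-1$ distinct roots $x$ with $|x|\neq 1$.
   Context: A set $\{\theta_1,\dots,\theta_{N-1}\}\subset(0,1)$ is called a spectrum for $A(x)$ if the $\theta_j$ are pairwise distinct and, with $\theta_0=0$, $A(e^{2\pi i(\theta_i-\theta_j)})=0$ for all $0\leq i,j\leq N-1$ with $i\neq j$. *)

theory Defs
  imports "HOL-Analysis.Analysis" "HOL-Computational_Algebra.Polynomial"
begin

definition set_poly :: "nat set \<Rightarrow> complex poly" where
  "set_poly A = (\<Sum>a\<in>A. monom 1 a)"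

text \<open>theta 1, ..., theta (N-1) is a spectrum for A(x), with the convention theta 0 = 0
  (the value of the function theta at 0 is ignored and replaced by 0).\<close>
definition is_spectrum :: "nat set \<Rightarrow> (nat \<Rightarrow> real) \<Rightarrow> bool" where
  "is_spectrum A \<theta> \<longleftrightarrow>
     (let N = card A; th = \<theta>(0 := 0) in
       (\<forall>j\<in>{1..N-1}. 0 < th j \<and> th j < 1) \<and>
       inj_on th {1..N-1} \<and>
       (\<forall>i<N. \<forall>j<N. i \<noteq> j \<longrightarrow>
          poly (set_poly A) (cis (2 * pi * (th i - th j))) = 0))"

end

theory Submission
  imports Defs "HOL-Computational_Algebra.Fundamental_Theorem_Algebra"
begin


definition sfield :: "complex set \<Rightarrow> bool" where
  "sfield K \<longleftrightarrow> 0 \<in> K \<and> 1 \<in> K \<and> (\<forall>x\<in>K. \<forall>y\<in>K. x + y \<in> K \<and> x * y \<in> K \<and> x - y \<in> K)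
      \<and> (\<forall>x\<in>K. inverse x \<in> K)"

definition emb :: "complex set \<Rightarrow> (complex \<Rightarrow> complex) \<Rightarrow> bool" where
  "emb K \<sigma> \<longleftrightarrow> \<sigma> 1 = 1 \<and> (\<forall>x\<in>K. \<forall>y\<in>K. \<sigma> (x + y) = \<sigma> x + \<sigma> y \<and> \<sigma> (x * y) = \<sigma> x * \<sigma> y)"

definition kpoly :: "complex set \<Rightarrow> complex poly \<Rightarrow> bool" where
  "kpoly K p \<longleftrightarrow> (\<forall>i. coeff p i \<in> K)"

lemma sf0: "sfield K \<Longrightarrow> 0 \<in> K" and sf1: "sfield K \<Longrightarrow> 1 \<in> K"
  and sfadd: "sfield K \<Longrightarrow> x \<in> K \<Longrightarrow> y \<in> K \<Longrightarrow> x + y \<in> K"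
  and sfmult: "sfield K \<Longrightarrow> x \<in> K \<Longrightarrow> y \<in> K \<Longrightarrow> x * y \<in> K"
  and sfdiff: "sfield K \<Longrightarrow> x \<in> K \<Longrightarrow> y \<in> K \<Longrightarrow> x - y \<in> K"
  and sfinv: "sfield K \<Longrightarrow> x \<in> K \<Longrightarrow> inverse x \<in> K"
  by (auto simp: sfield_def)

lemma sfminus: "sfield K \<Longrightarrow> x \<in> K \<Longrightarrow> - x \<in> K"
  using sfdiff[of K 0 x] sf0[of K] by simp

lemma sfdiv: "sfield K \<Longrightarrow> x \<in> K \<Longrightarrow> y \<in> K \<Longrightarrow> x / y \<in> K"
  by (simp add: divide_inverse sfmult sfinv)

lemma sfpow: "sfield K \<Longrightarrow> x \<in> K \<Longrightarrow> x ^ n \<in> K"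
  by (induction n) (auto intro: sf1 sfmult)

lemma sfsum: "sfield K \<Longrightarrow> (\<And>i. i \<in> S \<Longrightarrow> f i \<in> K) \<Longrightarrow> sum f S \<in> K"
  by (induction S rule: infinite_finite_induct) (auto intro: sf0 sfadd)

lemma sfprod: "sfield K \<Longrightarrow> (\<And>i. i \<in> S \<Longrightarrow> f i \<in> K) \<Longrightarrow> prod f S \<in> K"
  by (induction S rule: infinite_finite_induct) (auto intro: sf1 sfmult)

lemma sf_of_nat: "sfield K \<Longrightarrow> of_nat n \<in> K"
  by (induction n) (auto intro: sf0 sf1 sfadd)

lemma sf_of_int: "sfield K \<Longrightarrow> of_int n \<in> K"
proof (cases "n \<ge> 0")
  case True
  then show ?thesis if "sfield K" using sf_of_nat[OF that, of "nat n"] by simp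
next
  case False
  then show ?thesis if "sfield K" using sfminus[OF that sf_of_nat[OF that, of "nat (-n)"]] by simp
qed

lemma sf_Rats: "sfield K \<Longrightarrow> x \<in> \<rat> \<Longrightarrow> x \<in> K"
  by (erule Rats_cases') (auto intro: sfdiv sf_of_int)

lemma sfield_Rats: "sfield \<rat>"
  by (auto simp: sfield_def)

lemma embD: assumes "emb K \<sigma>" "x \<in> K" "y \<in> K"
  shows "\<sigma> (x + y) = \<sigma> x + \<sigma> y" "\<sigma> (x * y) = \<sigma> x * \<sigma> y"
  using assms by (auto simp: emb_def)

lemma emb1: "emb K \<sigma> \<Longrightarrow> \<sigma> 1 = 1" by (simp add: emb_def)

lemma emb0: assumes "sfield K" "emb K \<sigma>" shows "\<sigma> 0 = 0"
  using embD(1)[OF assms(2) sf0[OF assms(1)] sf0[OF assms(1)]] by simp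

lemma emb_minus: assumes "sfield K" "emb K \<sigma>" "x \<in> K" shows "\<sigma> (- x) = - \<sigma> x"
  using embD(1)[OF assms(2) assms(3) sfminus[OF assms(1,3)]] emb0[OF assms(1,2)] by (simp add: eq_neg_iff_add_eq_0 add.commute)

lemma emb_diff: assumes "sfield K" "emb K \<sigma>" "x \<in> K" "y \<in> K" shows "\<sigma> (x - y) = \<sigma> x - \<sigma> y"
  using embD(1)[OF assms(2) assms(3) sfminus[OF assms(1,4)]] emb_minus[OF assms(1,2,4)] by simp

lemma emb_inverse: assumes "sfield K" "emb K \<sigma>" "x \<in> K" shows "\<sigma> (inverse x) = inverse (\<sigma> x)"
proof (cases "x = 0")
  case True then show ?thesis using emb0[OF assms(1,2)] by simp
next
  case False
  have "\<sigma> x * \<sigma> (inverse x) = 1"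
    using embD(2)[OF assms(2) assms(3) sfinv[OF assms(1,3)]] False emb1[OF assms(2)] by simp
  then show ?thesis by (metis inverse_unique)
qed

lemma emb_div: assumes "sfield K" "emb K \<sigma>" "x \<in> K" "y \<in> K" shows "\<sigma> (x / y) = \<sigma> x / \<sigma> y"
  using embD(2)[OF assms(2) assms(3) sfinv[OF assms(1,4)]] emb_inverse[OF assms(1,2,4)]
  by (simp add: divide_inverse)

lemma emb_pow: assumes "sfield K" "emb K \<sigma>" "x \<in> K" shows "\<sigma> (x ^ n) = \<sigma> x ^ n"
  by (induction n) (auto simp: emb1[OF assms(2)] embD(2)[OF assms(2) assms(3) sfpow[OF assms(1,3)]])

lemma emb_eq0: assumes "sfield K" "emb K \<sigma>" "x \<in> K" "\<sigma> x = 0" shows "x = 0"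
proof (rule ccontr)
  assume "x \<noteq> 0"
  have "\<sigma> x * \<sigma> (inverse x) = 1"
    using embD(2)[OF assms(2) assms(3) sfinv[OF assms(1,3)]] \<open>x \<noteq> 0\<close> emb1[OF assms(2)] by simp
  then show False using assms(4) by simp
qed

lemma emb_inj: assumes "sfield K" "emb K \<sigma>" "x \<in> K" "y \<in> K" "\<sigma> x = \<sigma> y" shows "x = y"
  using emb_eq0[OF assms(1,2) sfdiff[OF assms(1,3,4)]] emb_diff[OF assms(1-4)] assms(5) by simp

lemma emb_sum: assumes "sfield K" "emb K \<sigma>" "\<And>i. i \<in> S \<Longrightarrow> f i \<in> K"
  shows "\<sigma> (sum f S) = (\<Sum>i\<in>S. \<sigma> (f i))"
  using assms(3)
proof (induction S rule: infinite_finite_induct)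
  case (infinite A) then show ?case using emb0[OF assms(1,2)] by simp
next
  case empty then show ?case using emb0[OF assms(1,2)] by simp
next
  case (insert x F)
  then show ?case by (simp add: embD(1)[OF assms(2) _ sfsum[OF assms(1)]])
qed

lemma emb_of_nat: assumes "sfield K" "emb K \<sigma>" shows "\<sigma> (of_nat n) = of_nat n"
proof (induction n)
  case 0 then show ?case using emb0[OF assms] by simp
next
  case (Suc n)
  then show ?case using embD(1)[OF assms(2) sf_of_nat[OF assms(1)] sf1[OF assms(1)], of n] emb1[OF assms(2)]
    by (simp add: add.commute)
qed

lemma emb_of_int: assumes "sfield K" "emb K \<sigma>" shows "\<sigma> (of_int n) = of_int n"
proof (cases "n \<ge> 0")
  case True
  then show ?thesis using emb_of_nat[OF assms, of "nat n"] by simp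
next
  case False
  then show ?thesis using emb_minus[OF assms sf_of_nat[OF assms(1)], of "nat (-n)"] emb_of_nat[OF assms, of "nat (-n)"] by simp
qed

lemma emb_Rats: assumes "sfield K" "emb K \<sigma>" "x \<in> \<rat>" shows "\<sigma> x = x"
  using assms(3) by (rule Rats_cases') (simp add: emb_div[OF assms(1,2) sf_of_int[OF assms(1)] sf_of_int[OF assms(1)]] emb_of_int[OF assms(1,2)])

lemma emb_Rats_id: "emb \<rat> id" by (simp add: emb_def)



definition sring :: "complex set \<Rightarrow> bool" where
  "sring K \<longleftrightarrow> 0 \<in> K \<and> 1 \<in> K \<and> (\<forall>x\<in>K. \<forall>y\<in>K. x + y \<in> K \<and> x * y \<in> K \<and> x - y \<in> K)"

lemma sfield_sring: "sfield K \<Longrightarrow> sring K"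
  by (simp add: sfield_def sring_def)

lemma sring_Ints: "sring \<int>"
  by (auto simp: sring_def)

lemma sr0: "sring K \<Longrightarrow> 0 \<in> K" and sr1: "sring K \<Longrightarrow> 1 \<in> K"
  and sradd: "sring K \<Longrightarrow> x \<in> K \<Longrightarrow> y \<in> K \<Longrightarrow> x + y \<in> K"
  and srmult: "sring K \<Longrightarrow> x \<in> K \<Longrightarrow> y \<in> K \<Longrightarrow> x * y \<in> K"
  and srdiff: "sring K \<Longrightarrow> x \<in> K \<Longrightarrow> y \<in> K \<Longrightarrow> x - y \<in> K"
  by (auto simp: sring_def)

lemma srminus: "sring K \<Longrightarrow> x \<in> K \<Longrightarrow> - x \<in> K"
  using srdiff[of K 0 x] sr0[of K] by simp

lemma srsum: "sring K \<Longrightarrow> (\<And>i. i \<in> S \<Longrightarrow> f i \<in> K) \<Longrightarrow> sum f S \<in> K"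
  by (induction S rule: infinite_finite_induct) (auto intro: sr0 sradd)

lemma sr_of_nat: "sring K \<Longrightarrow> of_nat n \<in> K"
  by (induction n) (auto intro: sr0 sr1 sradd)

lemma srpow: "sring K \<Longrightarrow> x \<in> K \<Longrightarrow> x ^ n \<in> K"
  by (induction n) (auto intro: sr1 srmult)

lemma kpoly_0[simp]: "sring K \<Longrightarrow> kpoly K 0"
  by (simp add: kpoly_def sr0)

lemma kpoly_pCons: "kpoly K (pCons a p) \<longleftrightarrow> a \<in> K \<and> kpoly K p"
  unfolding kpoly_def by (metis coeff_pCons_0 coeff_pCons_Suc not0_implies_Suc coeff_pCons)

lemma kpoly_const: "sring K \<Longrightarrow> c \<in> K \<Longrightarrow> kpoly K [:c:]"
  by (simp add: kpoly_pCons)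

lemma kpoly_1: "sring K \<Longrightarrow> kpoly K 1"
  by (simp add: kpoly_pCons sr1 one_pCons)

lemma kpoly_x: "sring K \<Longrightarrow> kpoly K [:0,1:]"
  by (simp add: kpoly_pCons sr1 sr0)

lemma kpoly_add: "sring K \<Longrightarrow> kpoly K p \<Longrightarrow> kpoly K q \<Longrightarrow> kpoly K (p + q)"
  by (simp add: kpoly_def sradd)

lemma kpoly_diff: "sring K \<Longrightarrow> kpoly K p \<Longrightarrow> kpoly K q \<Longrightarrow> kpoly K (p - q)"
  by (simp add: kpoly_def srdiff)

lemma kpoly_smult: "sring K \<Longrightarrow> c \<in> K \<Longrightarrow> kpoly K p \<Longrightarrow> kpoly K (smult c p)"
  by (simp add: kpoly_def srmult)

lemma kpoly_mult: "sring K \<Longrightarrow> kpoly K p \<Longrightarrow> kpoly K q \<Longrightarrow> kpoly K (p * q)"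
  by (simp add: kpoly_def coeff_mult srsum srmult)

lemma kpoly_monom: "sring K \<Longrightarrow> c \<in> K \<Longrightarrow> kpoly K (monom c n)"
  by (simp add: kpoly_def coeff_monom sr0)

lemma kpoly_pow: "sring K \<Longrightarrow> kpoly K p \<Longrightarrow> kpoly K (p ^ n)"
  by (induction n) (auto intro: kpoly_1 kpoly_mult)

lemma kpoly_pderiv: "sring K \<Longrightarrow> kpoly K p \<Longrightarrow> kpoly K (pderiv p)"
  unfolding kpoly_def coeff_pderiv
proof (intro allI)
  fix i assume "sring K" "\<forall>i. coeff p i \<in> K"
  then show "of_nat (Suc i) * coeff p (Suc i) \<in> K" using sr_of_nat[of K "Suc i"] srmult by blast
qed

lemma kpoly_mono: "K \<subseteq> L \<Longrightarrow> kpoly K p \<Longrightarrow> kpoly L p"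
  by (auto simp: kpoly_def)

lemma kpoly_poly: "sring K \<Longrightarrow> kpoly K p \<Longrightarrow> x \<in> K \<Longrightarrow> poly p x \<in> K"
  by (induction p) (auto simp: kpoly_pCons sr0 sradd srmult)

lemma kdiv:
  assumes K: "sring K" and d: "kpoly K d" "d \<noteq> 0" and inv: "inverse (lead_coeff d) \<in> K"
  shows "kpoly K p \<Longrightarrow> \<exists>q r. kpoly K q \<and> kpoly K r \<and> p = q * d + r \<and> (r = 0 \<or> degree r < degree d)"
proof (induction "degree p" arbitrary: p rule: less_induct)
  case less
  show ?case
  proof (cases "p = 0 \<or> degree p < degree d")
    case True
    then show ?thesis using less.prems K by (intro exI[of _ 0] exI[of _ p]) auto
  next
    case False
    hence pnz: "p \<noteq> 0" and dg: "degree d \<le> degree p" by auto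
    define c where "c = lead_coeff p * inverse (lead_coeff d)"
    define k where "k = degree p - degree d"
    define p' where "p' = p - monom c k * d"
    have cK: "c \<in> K" unfolding c_def using less.prems inv K by (auto simp: kpoly_def intro: srmult)
    have p'K: "kpoly K p'" unfolding p'_def using less.prems K d cK
      by (intro kpoly_diff kpoly_mult kpoly_monom) auto
    have "coeff p' n = 0" if "n \<ge> degree p" for n
    proof (cases "n = degree p")
      case True
      have "coeff (monom c k * d) n = c * coeff d (degree d)"
        using True dg by (simp add: coeff_monom_mult k_def)
      also have "\<dots> = lead_coeff p" using d(2) by (simp add: c_def)
      finally show ?thesis by (simp add: p'_def True)
    next
      case False
      hence n: "n > degree p" using that by simp
      have "coeff (monom c k * d) n = 0"
        using n dg by (simp add: coeff_monom_mult k_def coeff_eq_0)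
      then show ?thesis using n by (simp add: p'_def coeff_eq_0)
    qed
    hence p'cases: "p' = 0 \<or> degree p' < degree p"
      by (metis leading_coeff_0_iff not_le)
    show ?thesis
    proof (cases "p' = 0")
      case True
      then show ?thesis using cK K d
        by (intro exI[of _ "monom c k"] exI[of _ 0]) (auto simp: p'_def kpoly_monom)
    next
      case False
      with p'cases have "degree p' < degree p" by simp
      from less.hyps[OF this p'K] obtain q r where qr: "kpoly K q" "kpoly K r" "p' = q * d + r" "r = 0 \<or> degree r < degree d"
        by blast
      have "p = (q + monom c k) * d + r" using qr(3) by (simp add: p'_def algebra_simps)
      then show ?thesis using qr K cK by (intro exI[of _ "q + monom c k"] exI[of _ r]) (auto intro: kpoly_add kpoly_monom)
    qed
  qed
qed

lemma map_emb_coeff: "sfield K \<Longrightarrow> emb K \<sigma> \<Longrightarrow> coeff (map_poly \<sigma> p) i = \<sigma> (coeff p i)"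
  by (simp add: coeff_map_poly emb0)

lemma map_emb_add: assumes "sfield K" "emb K \<sigma>" "kpoly K p" "kpoly K q"
  shows "map_poly \<sigma> (p + q) = map_poly \<sigma> p + map_poly \<sigma> q"
  using assms by (intro poly_eqI) (simp add: map_emb_coeff embD kpoly_def)

lemma map_emb_diff: assumes "sfield K" "emb K \<sigma>" "kpoly K p" "kpoly K q"
  shows "map_poly \<sigma> (p - q) = map_poly \<sigma> p - map_poly \<sigma> q"
  using assms by (intro poly_eqI) (simp add: map_emb_coeff emb_diff kpoly_def)

lemma map_emb_mult: assumes "sfield K" "emb K \<sigma>" "kpoly K p" "kpoly K q"
  shows "map_poly \<sigma> (p * q) = map_poly \<sigma> p * map_poly \<sigma> q"
proof (intro poly_eqI)
  fix n
  have "coeff (map_poly \<sigma> (p * q)) n = \<sigma> (\<Sum>i\<le>n. coeff p i * coeff q (n - i))"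
    using assms by (simp add: map_emb_coeff coeff_mult)
  also have "\<dots> = (\<Sum>i\<le>n. \<sigma> (coeff p i * coeff q (n - i)))"
    using assms by (intro emb_sum) (auto simp: kpoly_def intro: sfmult)
  also have "\<dots> = (\<Sum>i\<le>n. \<sigma> (coeff p i) * \<sigma> (coeff q (n - i)))"
    using assms by (intro sum.cong refl embD) (auto simp: kpoly_def)
  also have "\<dots> = coeff (map_poly \<sigma> p * map_poly \<sigma> q) n"
    using assms by (simp add: map_emb_coeff coeff_mult)
  finally show "coeff (map_poly \<sigma> (p * q)) n = coeff (map_poly \<sigma> p * map_poly \<sigma> q) n" .
qed

lemma map_emb_const: "sfield K \<Longrightarrow> emb K \<sigma> \<Longrightarrow> map_poly \<sigma> [:c:] = [:\<sigma> c:]"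
  by (intro poly_eqI) (simp add: map_emb_coeff coeff_pCons split: nat.split add: emb0)

lemma map_emb_1: "sfield K \<Longrightarrow> emb K \<sigma> \<Longrightarrow> map_poly \<sigma> 1 = 1"
  using map_emb_const[of K \<sigma> 1] by (simp add: emb1 one_pCons)

lemma map_emb_x: "sfield K \<Longrightarrow> emb K \<sigma> \<Longrightarrow> map_poly \<sigma> [:0,1:] = [:0,1:]"
  by (intro poly_eqI) (simp add: map_emb_coeff coeff_pCons split: nat.split add: emb0 emb1)

lemma map_emb_poly: assumes "sfield K" "emb K \<sigma>" "x \<in> K"
  shows "kpoly K p \<Longrightarrow> poly (map_poly \<sigma> p) (\<sigma> x) = \<sigma> (poly p x)"
proof (induction p)
  case 0
  then show ?case using emb0[OF assms(1,2)] by simp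
next
  case (pCons a p)
  have pK: "poly p x \<in> K" using pCons kpoly_poly[OF sfield_sring[OF assms(1)] _ assms(3)] by (simp add: kpoly_pCons)
  have aK: "a \<in> K" using pCons by (simp add: kpoly_pCons)
  have "\<sigma> (poly (pCons a p) x) = \<sigma> a + \<sigma> x * \<sigma> (poly p x)"
    using assms pK aK by (simp add: embD sfmult)
  then show ?case using pCons emb0[OF assms(1,2)] by (simp add: kpoly_pCons map_poly_pCons)
qed

lemma map_emb_eq0: assumes "sfield K" "emb K \<sigma>" "kpoly K p"
  shows "map_poly \<sigma> p = 0 \<longleftrightarrow> p = 0"
proof
  assume "map_poly \<sigma> p = 0"
  then have "\<sigma> (coeff p i) = 0" for i using map_emb_coeff[OF assms(1,2)] by (metis coeff_0)
  then have "coeff p i = 0" for i using emb_eq0[OF assms(1,2)] assms(3) by (auto simp: kpoly_def)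
  then show "p = 0" by (simp add: poly_eqI)
qed (simp)

lemma map_emb_degree: assumes "sfield K" "emb K \<sigma>" "kpoly K p"
  shows "degree (map_poly \<sigma> p) = degree p"
proof (cases "p = 0")
  case False
  have "coeff (map_poly \<sigma> p) (degree p) \<noteq> 0"
    using map_emb_coeff[OF assms(1,2)] emb_eq0[OF assms(1,2)] assms(3) False
    by (metis kpoly_def leading_coeff_0_iff)
  moreover have "degree (map_poly \<sigma> p) \<le> degree p"
    by (rule degree_le) (auto simp: map_emb_coeff[OF assms(1,2)] coeff_eq_0 emb0[OF assms(1,2)])
  ultimately show ?thesis by (simp add: le_antisym le_degree)
qed simp

lemma map_emb_Rats: assumes "sfield K" "emb K \<sigma>" "kpoly \<rat> p"
  shows "map_poly \<sigma> p = p"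
  using assms by (intro poly_eqI) (simp add: map_emb_coeff emb_Rats kpoly_def)

lemma emb_poly_Rats: assumes "sfield K" "emb K \<sigma>" "kpoly \<rat> p" "x \<in> K"
  shows "\<sigma> (poly p x) = poly p (\<sigma> x)"
proof -
  have "\<rat> \<subseteq> K" using sf_Rats[OF assms(1)] by blast
  then show ?thesis using map_emb_poly[OF assms(1,2,4), of p] map_emb_Rats[OF assms(1-3)]
    kpoly_mono[OF _ assms(3), of K] by auto
qed



definition alg_over :: "complex set \<Rightarrow> complex \<Rightarrow> bool" where
  "alg_over K \<alpha> \<longleftrightarrow> (\<exists>p. kpoly K p \<and> p \<noteq> 0 \<and> poly p \<alpha> = 0)"

definition ismin :: "complex set \<Rightarrow> complex \<Rightarrow> complex poly \<Rightarrow> bool" where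
  "ismin K \<alpha> mp \<longleftrightarrow> kpoly K mp \<and> mp \<noteq> 0 \<and> poly mp \<alpha> = 0 \<and>
     (\<forall>p. kpoly K p \<and> p \<noteq> 0 \<and> poly p \<alpha> = 0 \<longrightarrow> degree mp \<le> degree p)"

lemma min_exists: assumes "alg_over K \<alpha>" shows "\<exists>mp. ismin K \<alpha> mp"
proof -
  let ?P = "\<lambda>n. \<exists>p. kpoly K p \<and> p \<noteq> 0 \<and> poly p \<alpha> = 0 \<and> degree p = n"
  have "\<exists>n. ?P n" using assms by (auto simp: alg_over_def)
  then obtain n where n: "?P n" "\<And>m. m < n \<Longrightarrow> \<not> ?P m" using exists_least_iff[of ?P] by blast
  then obtain p where "kpoly K p \<and> p \<noteq> 0 \<and> poly p \<alpha> = 0 \<and> degree p = n" by blast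
  then show ?thesis using n(2) unfolding ismin_def by (intro exI[of _ p]) (metis not_le)
qed

lemma min_dvd: assumes K: "sfield K" and m: "ismin K \<alpha> mp" and q: "kpoly K q" "poly q \<alpha> = 0"
  shows "\<exists>s. kpoly K s \<and> q = s * mp"
proof -
  have mK: "kpoly K mp" "mp \<noteq> 0" using m by (auto simp: ismin_def)
  have "inverse (lead_coeff mp) \<in> K" using mK K by (auto simp: kpoly_def intro: sfinv)
  from kdiv[OF sfield_sring[OF K] mK this q(1)] obtain s r where
    sr: "kpoly K s" "kpoly K r" "q = s * mp + r" "r = 0 \<or> degree r < degree mp" by blast
  have "poly r \<alpha> = 0" using sr(3) q(2) m by (simp add: ismin_def)
  then have "r = 0" using sr(2,4) m unfolding ismin_def by (meson not_le)
  then show ?thesis using sr by auto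
qed

lemma min_nz:
  assumes K: "sfield K" and e: "emb K \<sigma>" and m: "ismin K \<alpha> mp"
    and b: "poly (map_poly \<sigma> mp) \<beta> = 0" and q: "kpoly K q" "poly q \<alpha> \<noteq> 0"
  shows "poly (map_poly \<sigma> q) \<beta> \<noteq> 0"
proof
  assume qb: "poly (map_poly \<sigma> q) \<beta> = 0"
  have mK: "kpoly K mp" "mp \<noteq> 0" "poly mp \<alpha> = 0" using m by (auto simp: ismin_def)
  have R: "sring K" using K by (rule sfield_sring)
  let ?S = "\<lambda>n. \<exists>h. kpoly K h \<and> h \<noteq> 0 \<and> poly (map_poly \<sigma> h) \<beta> = 0 \<and> degree h = n"
  have "\<exists>n. ?S n" using mK b by blast
  then obtain n where n: "?S n" "\<And>k. k < n \<Longrightarrow> \<not> ?S k" using exists_least_iff[of ?S] by blast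
  then obtain g where g: "kpoly K g" "g \<noteq> 0" "poly (map_poly \<sigma> g) \<beta> = 0" "degree g = n" by blast
  have ginv: "inverse (lead_coeff g) \<in> K" using g K by (auto simp: kpoly_def intro: sfinv)
  have dvd: "\<exists>s. kpoly K s \<and> h = s * g" if h: "kpoly K h" "poly (map_poly \<sigma> h) \<beta> = 0" for h
  proof -
    from kdiv[OF R g(1,2) ginv h(1)] obtain s r where
      sr: "kpoly K s" "kpoly K r" "h = s * g + r" "r = 0 \<or> degree r < degree g" by blast
    have "map_poly \<sigma> h = map_poly \<sigma> s * map_poly \<sigma> g + map_poly \<sigma> r"
      using sr map_emb_add[OF K e kpoly_mult[OF R sr(1) g(1)] sr(2)] map_emb_mult[OF K e sr(1) g(1)] by simp
    then have "poly (map_poly \<sigma> r) \<beta> = 0" using h(2) g(3) by simp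
    then have "r = 0" using sr(2,4) n(2) g(4) by blast
    then show ?thesis using sr by auto
  qed
  obtain s where s: "kpoly K s" "mp = s * g" using dvd[OF mK(1) b] by blast
  obtain t where t: "kpoly K t" "q = t * g" using dvd[OF q(1) qb] by blast
  have "poly g \<alpha> \<noteq> 0" using t q(2) by auto
  then have "poly s \<alpha> = 0" using s mK(3) by simp
  moreover have "s \<noteq> 0" using s mK(2) by auto
  ultimately have "degree mp \<le> degree s" using m s(1) by (auto simp: ismin_def)
  moreover have "degree mp = degree s + degree g" using s mK(2) by (simp add: degree_mult_eq)
  ultimately have "degree g = 0" by simp
  then obtain c where c: "g = [:c:]" by (meson degree_eq_zeroE)
  then have "c \<noteq> 0" "c \<in> K" using g(1,2) by (auto simp: kpoly_pCons)
  moreover have "poly (map_poly \<sigma> g) \<beta> = \<sigma> c" using c K e by (simp add: map_emb_const)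
  ultimately show False using g(3) emb_eq0[OF K e] by metis
qed

lemma emb_extend:
  assumes K: "sfield K" and e: "emb K \<sigma>" and m: "ismin K \<alpha> mp"
    and b: "poly (map_poly \<sigma> mp) \<beta> = 0"
  shows "\<exists>K' \<sigma>'. sfield K' \<and> emb K' \<sigma>' \<and> K \<subseteq> K' \<and> \<alpha> \<in> K' \<and> \<sigma>' \<alpha> = \<beta> \<and> (\<forall>x\<in>K. \<sigma>' x = \<sigma> x)"
proof -
  have R: "sring K" using K by (rule sfield_sring)
  define P where "P q = poly (map_poly \<sigma> q) \<beta>" for q
  define rep where "rep x p q \<longleftrightarrow> kpoly K p \<and> kpoly K q \<and> poly q \<alpha> \<noteq> 0 \<and> x = poly p \<alpha> / poly q \<alpha>" for x p q
  define K' where "K' = {x. \<exists>p q. rep x p q}"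
  define \<sigma>' where "\<sigma>' x = (SOME v. \<exists>p q. rep x p q \<and> v = P p / P q)" for x
  have nz: "P q \<noteq> 0" if "kpoly K q" "poly q \<alpha> \<noteq> 0" for q
    unfolding P_def by (rule min_nz[OF K e m b that])
  have Padd: "P (p + q) = P p + P q" if "kpoly K p" "kpoly K q" for p q
    using that K e by (simp add: P_def map_emb_add)
  have Pdiff: "P (p - q) = P p - P q" if "kpoly K p" "kpoly K q" for p q
    using that K e by (simp add: P_def map_emb_diff)
  have Pmult: "P (p * q) = P p * P q" if "kpoly K p" "kpoly K q" for p q
    using that K e by (simp add: P_def map_emb_mult)
  have P1: "P 1 = 1" using K e by (simp add: P_def map_emb_1)
  have wd: "P p1 / P q1 = P p2 / P q2" if r1: "rep x p1 q1" and r2: "rep x p2 q2" for x p1 q1 p2 q2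
  proof -
    have k: "kpoly K p1" "kpoly K q1" "poly q1 \<alpha> \<noteq> 0" "kpoly K p2" "kpoly K q2" "poly q2 \<alpha> \<noteq> 0"
      using r1 r2 by (auto simp: rep_def)
    define h where "h = p1 * q2 - p2 * q1"
    have hK: "kpoly K h" unfolding h_def using k R by (intro kpoly_diff kpoly_mult) auto
    have "poly h \<alpha> = 0" using r1 r2 k unfolding h_def rep_def by (simp add: field_simps)
    from min_dvd[OF K m hK this] obtain s where s: "kpoly K s" "h = s * mp" by blast
    have "P h = P s * P mp" using s Pmult m by (auto simp: ismin_def)
    then have "P h = 0" using b by (simp add: P_def)
    moreover have "P h = P p1 * P q2 - P p2 * P q1" unfolding h_def using k R
      by (simp add: Pdiff Pmult kpoly_mult)
    ultimately show ?thesis using nz k by (simp add: field_simps)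
  qed
  have \<sigma>'_rep: "\<sigma>' x = P p / P q" if "rep x p q" for x p q
  proof -
    have "\<exists>v. \<exists>p q. rep x p q \<and> v = P p / P q" using that by blast
    then have "\<exists>p' q'. rep x p' q' \<and> \<sigma>' x = P p' / P q'"
      unfolding \<sigma>'_def by (rule someI_ex)
    then show ?thesis using wd that by metis
  qed
  have repadd: "rep (x + y) (p1 * q2 + p2 * q1) (q1 * q2)" if "rep x p1 q1" "rep y p2 q2" for x y p1 q1 p2 q2
    using that R unfolding rep_def by (auto intro!: kpoly_add kpoly_mult simp: field_simps)
  have repdiff: "rep (x - y) (p1 * q2 - p2 * q1) (q1 * q2)" if "rep x p1 q1" "rep y p2 q2" for x y p1 q1 p2 q2
    using that R unfolding rep_def by (auto intro!: kpoly_diff kpoly_mult simp: field_simps)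
  have repmult: "rep (x * y) (p1 * p2) (q1 * q2)" if "rep x p1 q1" "rep y p2 q2" for x y p1 q1 p2 q2
    using that R unfolding rep_def by (auto intro!: kpoly_mult simp: field_simps)
  have repconst: "rep c [:c:] 1" if "c \<in> K" for c
    using that R unfolding rep_def by (auto intro!: kpoly_const kpoly_1)
  have sfK': "sfield K'"
    unfolding sfield_def
  proof (intro conjI ballI)
    show "0 \<in> K'" using repconst[OF sf0[OF K]] K'_def by blast
    show "1 \<in> K'" using repconst[OF sf1[OF K]] K'_def by blast
  next
    fix x y assume "x \<in> K'" "y \<in> K'"
    then obtain p1 q1 p2 q2 where "rep x p1 q1" "rep y p2 q2" unfolding K'_def by blast
    then show "x + y \<in> K'" "x * y \<in> K'" "x - y \<in> K'"
      unfolding K'_def using repadd repmult repdiff by blast+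
  next
    fix x assume "x \<in> K'"
    then obtain p q where r: "rep x p q" unfolding K'_def by blast
    show "inverse x \<in> K'"
    proof (cases "poly p \<alpha> = 0")
      case True
      then have "x = 0" using r by (simp add: rep_def)
      then show ?thesis using repconst[OF sf0[OF K]] K'_def by auto
    next
      case False
      then have "rep (inverse x) q p" using r by (auto simp: rep_def)
      then show ?thesis unfolding K'_def by blast
    qed
  qed
  have emK': "emb K' \<sigma>'"
    unfolding emb_def
  proof (intro conjI ballI)
    have "rep 1 1 1" using repconst[OF sf1[OF K]] by (simp add: one_pCons)
    then show "\<sigma>' 1 = 1" using \<sigma>'_rep P1 by simp
  next
    fix x y assume "x \<in> K'" "y \<in> K'"
    then obtain p1 q1 p2 q2 where r: "rep x p1 q1" "rep y p2 q2" unfolding K'_def by blast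
    have k: "kpoly K p1" "kpoly K q1" "poly q1 \<alpha> \<noteq> 0" "kpoly K p2" "kpoly K q2" "poly q2 \<alpha> \<noteq> 0"
      using r by (auto simp: rep_def)
    have n1: "P q1 \<noteq> 0" and n2: "P q2 \<noteq> 0" using nz k by auto
    have "\<sigma>' (x + y) = (P p1 * P q2 + P p2 * P q1) / (P q1 * P q2)"
      using \<sigma>'_rep[OF repadd[OF r]] k R by (simp add: Padd Pmult kpoly_mult)
    then show "\<sigma>' (x + y) = \<sigma>' x + \<sigma>' y"
      using \<sigma>'_rep[OF r(1)] \<sigma>'_rep[OF r(2)] n1 n2 by (simp add: add_frac_eq)
    have "\<sigma>' (x * y) = (P p1 * P p2) / (P q1 * P q2)"
      using \<sigma>'_rep[OF repmult[OF r]] k R by (simp add: Pmult kpoly_mult)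
    then show "\<sigma>' (x * y) = \<sigma>' x * \<sigma>' y"
      using \<sigma>'_rep[OF r(1)] \<sigma>'_rep[OF r(2)] by simp
  qed
  have sub: "K \<subseteq> K'" using repconst K'_def by blast
  have ext: "\<forall>x\<in>K. \<sigma>' x = \<sigma> x"
  proof
    fix x assume "x \<in> K"
    then show "\<sigma>' x = \<sigma> x" using \<sigma>'_rep[OF repconst] P1 K e by (simp add: P_def map_emb_const)
  qed
  have ra: "rep \<alpha> [:0,1:] 1" using R unfolding rep_def by (auto intro: kpoly_x kpoly_1)
  then have "\<alpha> \<in> K'" unfolding K'_def by blast
  moreover have "\<sigma>' \<alpha> = \<beta>" using \<sigma>'_rep[OF ra] P1 K e by (simp add: P_def map_emb_x)
  ultimately show ?thesis using sfK' emK' sub ext by blast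
qed



lemma root_exists_map:
  assumes K: "sfield K" and e: "emb K \<sigma>" and m: "ismin K \<alpha> mp"
  shows "\<exists>\<beta>. poly (map_poly \<sigma> mp) \<beta> = 0"
proof -
  have mK: "kpoly K mp" "mp \<noteq> 0" "poly mp \<alpha> = 0" using m by (auto simp: ismin_def)
  have "degree mp \<noteq> 0"
  proof
    assume "degree mp = 0"
    then obtain c where "mp = [:c:]" by (meson degree_eq_zeroE)
    then show False using mK by simp
  qed
  then have "degree (map_poly \<sigma> mp) \<noteq> 0" using map_emb_degree[OF K e mK(1)] by simp
  then show ?thesis using fundamental_theorem_of_algebra[of "map_poly \<sigma> mp"] constant_degree[of "map_poly \<sigma> mp"] by simp
qed

lemma alg_over_mono: "K \<subseteq> L \<Longrightarrow> alg_over K x \<Longrightarrow> alg_over L x"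
  unfolding alg_over_def using kpoly_mono by blast

lemma emb_tower:
  "sfield K \<Longrightarrow> emb K \<sigma> \<Longrightarrow> \<forall>x\<in>set xs. alg_over \<rat> x \<Longrightarrow>
   \<exists>K' \<sigma>'. sfield K' \<and> emb K' \<sigma>' \<and> K \<subseteq> K' \<and> set xs \<subseteq> K' \<and> (\<forall>x\<in>K. \<sigma>' x = \<sigma> x)"
proof (induction xs arbitrary: K \<sigma>)
  case Nil
  then show ?case by (intro exI[of _ K] exI[of _ \<sigma>]) auto
next
  case (Cons x xs)
  have "\<rat> \<subseteq> K" using sf_Rats[OF Cons.prems(1)] by blast
  then have "alg_over K x" using Cons.prems(3) alg_over_mono by auto
  then obtain mp where m: "ismin K x mp" using min_exists by blast
  obtain \<beta> where b: "poly (map_poly \<sigma> mp) \<beta> = 0" using root_exists_map[OF Cons.prems(1,2) m] by blast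
  obtain K1 \<sigma>1 where 1: "sfield K1" "emb K1 \<sigma>1" "K \<subseteq> K1" "x \<in> K1" "\<forall>y\<in>K. \<sigma>1 y = \<sigma> y"
    using emb_extend[OF Cons.prems(1,2) m b] by blast
  obtain K2 \<sigma>2 where 2: "sfield K2" "emb K2 \<sigma>2" "K1 \<subseteq> K2" "set xs \<subseteq> K2" "\<forall>y\<in>K1. \<sigma>2 y = \<sigma>1 y"
    using Cons.IH[OF 1(1,2)] Cons.prems(3) by auto
  show ?case using 1 2 by (intro exI[of _ K2] exI[of _ \<sigma>2]) auto
qed

lemma emb_conj:
  assumes m: "ismin \<rat> z mp" and w: "poly mp w = 0" and xs: "\<forall>x\<in>set xs. alg_over \<rat> x"
  shows "\<exists>K \<sigma>. sfield K \<and> emb K \<sigma> \<and> z \<in> K \<and> set xs \<subseteq> K \<and> \<sigma> z = w"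
proof -
  have "poly (map_poly id mp) w = 0" using w by (simp add: map_poly_id)
  from emb_extend[OF sfield_Rats emb_Rats_id m this] obtain K1 \<sigma>1 where
    1: "sfield K1" "emb K1 \<sigma>1" "z \<in> K1" "\<sigma>1 z = w" by blast
  from emb_tower[OF 1(1,2) xs] obtain K2 \<sigma>2 where
    2: "sfield K2" "emb K2 \<sigma>2" "K1 \<subseteq> K2" "set xs \<subseteq> K2" "\<forall>y\<in>K1. \<sigma>2 y = \<sigma>1 y" by blast
  show ?thesis using 1 2 by (intro exI[of _ K2] exI[of _ \<sigma>2]) auto
qed



lemma poly_zero_many_roots:
  fixes g :: "complex poly"
  assumes "finite U" "card U = n" "degree g < n" "\<forall>u\<in>U. poly g u = 0"
  shows "g = 0"
proof (rule ccontr)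
  assume g: "g \<noteq> 0"
  have "U \<subseteq> {x. poly g x = 0}" using assms(4) by auto
  then have "card U \<le> card {x. poly g x = 0}" using poly_roots_finite[OF g] by (rule card_mono[rotated])
  also have "\<dots> \<le> degree g" using card_poly_roots_bound[OF g] .
  finally show False using assms(2,3) by simp
qed

lemma lagrange_bound:
  fixes U :: "complex set"
  assumes U: "finite U" "card U = n" "n \<ge> 1"
  shows "\<exists>B. \<forall>f. degree f < n \<longrightarrow> (\<forall>u\<in>U. norm (poly f u) \<le> 1) \<longrightarrow> (\<forall>i. norm (coeff f i) \<le> B)"
proof -
  define L where "L u = smult (inverse (\<Prod>v\<in>U-{u}. (u - v))) (\<Prod>v\<in>U-{u}. [:-v,1:])" for u
  have degL: "degree (L u) < n" if "u \<in> U" for u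
  proof -
    have "degree (L u) \<le> degree (\<Prod>v\<in>U-{u}. [:-v,1:])" unfolding L_def by (rule degree_smult_le)
    also have "\<dots> = (\<Sum>v\<in>U-{u}. degree [:-v,1:])" by (rule degree_prod_sum_eq) auto
    also have "\<dots> = card (U - {u})" by simp
    also have "\<dots> = n - 1" using U that by (simp add: card_Diff_singleton)
    finally show ?thesis using U by simp
  qed
  have polyL: "poly (L u) v = (if v = u then 1 else 0)" if "u \<in> U" "v \<in> U" for u v
  proof (cases "v = u")
    case True
    have "(\<Prod>w\<in>U-{u}. (u - w)) \<noteq> 0" using U by (subst prod_zero_iff) auto
    then show ?thesis using True by (simp add: L_def poly_prod)
  next
    case False
    have "(\<Prod>w\<in>U-{u}. poly [:-w,1:] v) = 0" using U that False
      by (subst prod_zero_iff) auto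
    then show ?thesis using False by (simp add: L_def poly_prod)
  qed
  define B where "B = (\<Sum>u\<in>U. \<Sum>j<n. norm (coeff (L u) j))"
  have "\<forall>i. norm (coeff f i) \<le> B" if f: "degree f < n" "\<forall>u\<in>U. norm (poly f u) \<le> 1" for f
  proof
    fix i
    define g where "g = f - (\<Sum>u\<in>U. smult (poly f u) (L u))"
    have "degree (\<Sum>u\<in>U. smult (poly f u) (L u)) < n"
      using degL U by (intro degree_sum_less) (auto intro: le_less_trans[OF degree_smult_le])
    then have "degree g < n" unfolding g_def using f(1) degree_diff_le_max[of f "\<Sum>u\<in>U. smult (poly f u) (L u)"]
      by linarith
    moreover have "\<forall>v\<in>U. poly g v = 0"
    proof
      fix v assume v: "v \<in> U"
      have "(\<Sum>u\<in>U. poly f u * poly (L u) v) = (\<Sum>u\<in>U. if u = v then poly f u else 0)"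
        using polyL v by (intro sum.cong) auto
      also have "\<dots> = poly f v" using U v by simp
      finally show "poly g v = 0" by (simp add: g_def poly_sum)
    qed
    ultimately have "g = 0" using poly_zero_many_roots[OF U(1,2)] by blast
    then have feq: "f = (\<Sum>u\<in>U. smult (poly f u) (L u))" by (simp add: g_def)
    show "norm (coeff f i) \<le> B"
    proof (cases "i < n")
      case False
      then have "coeff f i = 0" using f(1) by (simp add: coeff_eq_0)
      moreover have "B \<ge> 0" unfolding B_def by (intro sum_nonneg) auto
      ultimately show ?thesis by simp
    next
      case True
      have "norm (coeff f i) = norm (\<Sum>u\<in>U. poly f u * coeff (L u) i)"
        by (subst feq) (simp add: coeff_sum)
      also have "\<dots> \<le> (\<Sum>u\<in>U. norm (poly f u * coeff (L u) i))" by (rule norm_sum)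
      also have "\<dots> \<le> (\<Sum>u\<in>U. \<Sum>j<n. norm (coeff (L u) j))"
      proof (intro sum_mono)
        fix u assume "u \<in> U"
        have "norm (poly f u * coeff (L u) i) \<le> 1 * norm (coeff (L u) i)"
          unfolding norm_mult using f(2) \<open>u \<in> U\<close> by (intro mult_right_mono) auto
        also have "\<dots> \<le> (\<Sum>j<n. norm (coeff (L u) j))"
          using True by (simp only: mult_1) (intro member_le_sum, auto)
        finally show "norm (poly f u * coeff (L u) i) \<le> (\<Sum>j<n. norm (coeff (L u) j))" .
      qed
      finally show ?thesis by (simp add: B_def)
    qed
  qed
  then show ?thesis by blast
qed

lemma common_denom:
  fixes C :: "complex set"
  assumes "finite C" "C \<subseteq> \<rat>"
  shows "\<exists>D::int. D > 0 \<and> (\<forall>c\<in>C. of_int D * c \<in> \<int>)"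
  using assms
proof (induction C rule: finite_induct)
  case empty
  then show ?case by (intro exI[of _ 1]) auto
next
  case (insert c C)
  then obtain D :: int where D: "D > 0" "\<forall>c\<in>C. of_int D * c \<in> \<int>" by auto
  from insert.prems have "c \<in> \<rat>" by auto
  then obtain a b :: int where ab: "b > 0" "c = of_int a / of_int b" by (rule Rats_cases') auto
  have "of_int (D * b) * c = of_int (D * a)" using ab by simp
  moreover have "of_int (D * b) * x \<in> \<int>" if "x \<in> C" for x
  proof -
    have "of_int (D * b) * x = of_int b * (of_int D * x)" by simp
    then show ?thesis using D(2) that by (metis Ints_mult Ints_of_int)
  qed
  ultimately show ?case using D ab by (intro exI[of _ "D * b"]) auto
qed



lemma sring_Rats: "sring \<rat>" by (rule sfield_sring[OF sfield_Rats])

lemma Ints_sub_Rats: "(\<int> :: complex set) \<subseteq> \<rat>"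
  by (auto elim!: Ints_cases)

lemma ismin_degree: "ismin K \<alpha> mp \<Longrightarrow> degree mp \<noteq> 0"
proof
  assume m: "ismin K \<alpha> mp" and "degree mp = 0"
  then obtain c where "mp = [:c:]" by (meson degree_eq_zeroE)
  then show False using m by (simp add: ismin_def)
qed

lemma ismin_sep:
  assumes m: "ismin \<rat> z mp"
  shows "rsquarefree mp"
  unfolding rsquarefree_roots
proof (intro allI notI)
  fix a assume a: "poly mp a = 0 \<and> poly (pderiv mp) a = 0"
  obtain K \<sigma> where e: "sfield K" "emb K \<sigma>" "z \<in> K" "\<sigma> z = a"
    using emb_conj[OF m, of a "[]"] a by auto
  have mK: "kpoly \<rat> mp" "mp \<noteq> 0" using m by (auto simp: ismin_def)
  have kp: "kpoly \<rat> (pderiv mp)" using kpoly_pderiv[OF sring_Rats mK(1)] .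
  have "\<sigma> (poly (pderiv mp) z) = poly (pderiv mp) a" using emb_poly_Rats[OF e(1,2) kp e(3)] e(4) by simp
  then have s0: "\<sigma> (poly (pderiv mp) z) = 0" using a by simp
  have "\<rat> \<subseteq> K" using sf_Rats[OF e(1)] by blast
  then have "poly (pderiv mp) z \<in> K" using kpoly_poly[OF sfield_sring[OF e(1)] kpoly_mono[OF _ kp] e(3)] by blast
  then have z0: "poly (pderiv mp) z = 0" using emb_eq0[OF e(1,2)] s0 by blast
  have dm: "degree mp \<noteq> 0" using ismin_degree[OF m] .
  then have "pderiv mp \<noteq> 0" by (simp add: pderiv_eq_0_iff)
  then have "degree mp \<le> degree (pderiv mp)" using m kp z0 by (auto simp: ismin_def)
  then show False using dm by (simp add: degree_pderiv)
qed

lemma card_roots_sep: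
  fixes p :: "complex poly"
  assumes "rsquarefree p" "p \<noteq> 0"
  shows "card {u. poly p u = 0} = degree p"
proof -
  have "degree p = degree (smult (lead_coeff p) (\<Prod>z | poly p z = 0. [:- z, 1:]))"
    using complex_poly_decompose_rsquarefree[OF assms(1)] by simp
  also have "\<dots> = degree (\<Prod>z | poly p z = 0. [:- z, 1:])" using assms(2) by simp
  also have "\<dots> = (\<Sum>z | poly p z = 0. degree [:- z, 1:])" by (rule degree_prod_sum_eq) auto
  also have "\<dots> = card {u. poly p u = 0}" by simp
  finally show ?thesis by simp
qed

lemma kpoly_sum: "sring K \<Longrightarrow> (\<And>i. i \<in> S \<Longrightarrow> kpoly K (f i)) \<Longrightarrow> kpoly K (sum f S)"
  by (simp add: kpoly_def coeff_sum srsum)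

lemma poly_sum_below:
  fixes p :: "complex poly"
  assumes "\<forall>j\<ge>d. coeff p j = 0"
  shows "poly p x = (\<Sum>j<d. coeff p j * x ^ j)"
proof (cases "p = 0")
  case True then show ?thesis by simp
next
  case False
  then have "degree p < d" using assms by (metis leading_coeff_0_iff not_le)
  then have "{..degree p} \<subseteq> {..<d}" by auto
  then have "(\<Sum>j\<in>{..<d}. coeff p j * x ^ j) = (\<Sum>j\<in>{..degree p}. coeff p j * x ^ j)"
    by (intro sum.mono_neutral_right) (auto simp: coeff_eq_0)
  then show ?thesis by (simp add: poly_altdef)
qed



lemma finite_denom_ball:
  assumes D: "(D::int) > 0"
  shows "finite {c :: complex. of_int D * c \<in> \<int> \<and> norm c \<le> B}"
proof -
  define M where "M = \<lceil>of_int D * B\<rceil>"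
  have "{c :: complex. of_int D * c \<in> \<int> \<and> norm c \<le> B} \<subseteq> (\<lambda>m. of_int m / of_int D) ` {-M..M}"
  proof
    fix c :: complex assume c: "c \<in> {c. of_int D * c \<in> \<int> \<and> norm c \<le> B}"
    then obtain m where m: "of_int D * c = of_int m" by (auto elim!: Ints_cases)
    have "\<bar>real_of_int m\<bar> = norm (of_int D * c)" using m by (metis norm_of_int)
    also have "\<dots> = of_int D * norm c" using D by (simp add: norm_mult)
    also have "\<dots> \<le> of_int D * B" using c D by (intro mult_left_mono) auto
    finally have "\<bar>m\<bar> \<le> M" unfolding M_def by linarith
    moreover have "c = of_int m / of_int D" using m D by (simp add: field_simps)
    ultimately show "c \<in> (\<lambda>m. of_int m / of_int D) ` {-M..M}"
      by (auto intro!: image_eqI[of _ _ m] simp: abs_le_iff)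
  qed
  then show ?thesis by (rule finite_subset) auto
qed

lemma kronecker:
  fixes P :: "complex poly"
  assumes Pint: "\<forall>i. coeff P i \<in> \<int>" and Pm: "lead_coeff P = 1" and Pz: "poly P z = 0"
    and z0: "z \<noteq> 0" and m: "ismin \<rat> z mp" and U1: "\<forall>u. poly mp u = 0 \<longrightarrow> norm u \<le> 1"
  shows "\<exists>k>0. z ^ k = 1"
proof -
  have RQ: "sring \<rat>" by (rule sring_Rats)
  have RZ: "sring \<int>" by (rule sring_Ints)
  have PZ: "kpoly \<int> P" using Pint by (simp add: kpoly_def)
  have P0: "P \<noteq> 0" using Pm by auto
  have mK: "kpoly \<rat> mp" "mp \<noteq> 0" "poly mp z = 0" using m by (auto simp: ismin_def)
  define n where "n = degree mp"
  have n1: "n \<ge> 1" using ismin_degree[OF m] n_def by simp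
  define U where "U = {u. poly mp u = 0}"
  have Ufin: "finite U" unfolding U_def using poly_roots_finite[OF mK(2)] .
  have Ucard: "card U = n" unfolding U_def n_def using card_roots_sep[OF ismin_sep[OF m] mK(2)] .
  obtain B where B: "\<And>f i. degree f < n \<Longrightarrow> (\<forall>u\<in>U. norm (poly f u) \<le> 1) \<Longrightarrow> norm (coeff f i) \<le> B"
    using lagrange_bound[OF Ufin Ucard n1] by blast
  define d where "d = degree P"
  have minv: "inverse (lead_coeff mp) \<in> \<rat>" using mK by (auto simp: kpoly_def)
  have exR: "\<forall>k. \<exists>r. kpoly \<rat> r \<and> degree r < n \<and> (\<exists>q. monom 1 k = q * mp + r)"
  proof
    fix k
    obtain q r where "kpoly \<rat> q" "kpoly \<rat> r" "monom 1 k = q * mp + r" "r = 0 \<or> degree r < degree mp"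
      using kdiv[OF RQ mK(1,2) minv kpoly_monom[OF RQ], of 1 k] by auto
    then show "\<exists>r. kpoly \<rat> r \<and> degree r < n \<and> (\<exists>q. monom 1 k = q * mp + r)"
      using n1 n_def by (intro exI[of _ r]) auto
  qed
  then obtain Rf where Rf: "\<And>k. kpoly \<rat> (Rf k)" "\<And>k. degree (Rf k) < n" "\<And>k. \<exists>q. monom 1 k = q * mp + Rf k"
    by metis
  have exS: "\<forall>k. \<exists>s. kpoly \<int> s \<and> (\<forall>j\<ge>d. coeff s j = 0) \<and> (\<exists>q. monom 1 k = q * P + s)"
  proof
    fix k
    obtain q r where qr: "kpoly \<int> q" "kpoly \<int> r" "monom 1 k = q * P + r" "r = 0 \<or> degree r < degree P"
      using kdiv[OF RZ PZ P0 _ kpoly_monom[OF RZ], of 1 k] Pm by auto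
    have "\<forall>j\<ge>d. coeff r j = 0" using qr(4) d_def by (auto simp: coeff_eq_0)
    then show "\<exists>s. kpoly \<int> s \<and> (\<forall>j\<ge>d. coeff s j = 0) \<and> (\<exists>q. monom 1 k = q * P + s)"
      using qr by blast
  qed
  then obtain Sf where Sf: "\<And>k. kpoly \<int> (Sf k)" "\<And>k j. j \<ge> d \<Longrightarrow> coeff (Sf k) j = 0"
      "\<And>k. \<exists>q. monom 1 k = q * P + Sf k"
    by metis
  have Rz: "poly (Rf k) z = z ^ k" for k
  proof -
    obtain q where "monom 1 k = q * mp + Rf k" using Rf(3) by blast
    then have "poly (monom 1 k) z = poly q z * poly mp z + poly (Rf k) z" by (metis poly_add poly_mult)
    then show ?thesis using mK(3) by (simp add: poly_monom)
  qed
  have Ru: "poly (Rf k) u = u ^ k" if "u \<in> U" for k u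
  proof -
    obtain q where "monom 1 k = q * mp + Rf k" using Rf(3) by blast
    then have "poly (monom 1 k) u = poly q u * poly mp u + poly (Rf k) u" by (metis poly_add poly_mult)
    then show ?thesis using that by (simp add: poly_monom U_def)
  qed
  have Sz: "poly (Sf k) z = z ^ k" for k
  proof -
    obtain q where "monom 1 k = q * P + Sf k" using Sf(3) by blast
    then have "poly (monom 1 k) z = poly q z * poly P z + poly (Sf k) z" by (metis poly_add poly_mult)
    then show ?thesis using Pz by (simp add: poly_monom)
  qed
  have Sint: "coeff (Sf k) j \<in> \<int>" for k j using Sf(1) by (simp add: kpoly_def)
  have Rcoeff: "coeff (Rf k) i = (\<Sum>j<d. coeff (Sf k) j * coeff (Rf j) i)" for k i
  proof -
    define G where "G = (\<Sum>j<d. smult (coeff (Sf k) j) (Rf j))"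
    have GK: "kpoly \<rat> G" unfolding G_def
      using Sint Ints_sub_Rats Rf(1) by (intro kpoly_sum[OF RQ] kpoly_smult[OF RQ]) auto
    define H where "H = Rf k - G"
    have HK: "kpoly \<rat> H" unfolding H_def using kpoly_diff[OF RQ Rf(1) GK] .
    have cG: "coeff G i = (\<Sum>j<d. coeff (Sf k) j * coeff (Rf j) i)" for i
      unfolding G_def by (simp add: coeff_sum)
    have "coeff H i = 0" if "i \<ge> n" for i
    proof -
      have "coeff (Rf j) i = 0" for j using Rf(2)[of j] that by (simp add: coeff_eq_0)
      then show ?thesis using Rf(2)[of k] that by (simp add: H_def cG coeff_eq_0)
    qed
    then have Hd: "H = 0 \<or> degree H < n" by (metis leading_coeff_0_iff not_le)
    have "poly G z = (\<Sum>j<d. coeff (Sf k) j * z ^ j)" unfolding G_def by (simp add: poly_sum Rz)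
    also have "\<dots> = poly (Sf k) z" using poly_sum_below[of d "Sf k" z] Sf(2) by simp
    finally have "poly H z = 0" unfolding H_def by (simp add: Rz Sz)
    then have "H = 0" using Hd m HK n_def by (auto simp: ismin_def)
    then show ?thesis using cG by (simp add: H_def)
  qed
  define C where "C = (\<lambda>(j, i). coeff (Rf j) i) ` ({..<d} \<times> {..<n})"
  have "finite C" "C \<subseteq> \<rat>" unfolding C_def using Rf(1) by (auto simp: kpoly_def)
  then obtain D :: int where D: "D > 0" "\<forall>c\<in>C. of_int D * c \<in> \<int>" using common_denom by blast
  have Dint: "of_int D * coeff (Rf k) i \<in> \<int>" if "i < n" for k i
  proof -
    have "of_int D * coeff (Rf k) i = (\<Sum>j<d. coeff (Sf k) j * (of_int D * coeff (Rf j) i))"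
      by (subst Rcoeff) (simp add: sum_distrib_left mult_ac)
    also have "\<dots> \<in> \<int>"
    proof -
      have "\<forall>j\<in>{..<d}. of_int D * coeff (Rf j) i \<in> \<int>" using D(2) that unfolding C_def by auto
      then show ?thesis by (intro Ints_sum) (auto intro: Ints_mult Sint)
    qed
    finally show ?thesis .
  qed
  have Rb: "norm (coeff (Rf k) i) \<le> B" for k i
  proof (rule B[OF Rf(2)])
    show "\<forall>u\<in>U. norm (poly (Rf k) u) \<le> 1"
      using U1 by (auto simp: Ru U_def norm_power intro: power_le_one)
  qed
  define Gs where "Gs = {c :: complex. of_int D * c \<in> \<int> \<and> norm c \<le> B}"
  have Gfin: "finite Gs" unfolding Gs_def using finite_denom_ball[OF D(1)] .
  define F where "F k = restrict (\<lambda>i. coeff (Rf k) i) {..<n}" for k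
  have "F k \<in> PiE {..<n} (\<lambda>_. Gs)" for k
    unfolding F_def Gs_def using Dint Rb by (subst restrict_PiE_iff) auto
  then have "range F \<subseteq> PiE {..<n} (\<lambda>_. Gs)" by auto
  then have "finite (range F)" using finite_PiE[of "{..<n}" "\<lambda>_. Gs"] Gfin by (auto intro: finite_subset)
  then have "\<not> inj F" using finite_imageD infinite_UNIV_nat by blast
  then obtain k l where kl: "k \<noteq> l" "F k = F l" unfolding inj_def by blast
  have "Rf k = Rf l"
  proof (rule poly_eqI)
    fix i show "coeff (Rf k) i = coeff (Rf l) i"
    proof (cases "i < n")
      case True
      then show ?thesis using fun_cong[OF kl(2), of i] by (simp add: F_def)
    next
      case False
      then show ?thesis using Rf(2)[of k] Rf(2)[of l] by (simp add: coeff_eq_0)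
    qed
  qed
  then have zkl: "z ^ k = z ^ l" using Rz by metis
  have pw: "z ^ (b - a) = 1" if "a < b" "z ^ a = z ^ b" for a b
  proof -
    have "z ^ b = z ^ a * z ^ (b - a)" using that(1) by (metis le_add_diff_inverse less_imp_le power_add)
    then show ?thesis using that z0 by simp
  qed
  show ?thesis
  proof (cases "k < l")
    case True then show ?thesis using pw[OF True zkl] by (intro exI[of _ "l - k"]) auto
  next
    case False
    then have "l < k" using kl(1) by simp
    then show ?thesis using pw[OF \<open>l < k\<close> zkl[symmetric]] by (intro exI[of _ "k - l"]) auto
  qed
qed



lemma count_lemma:
  fixes w :: "nat \<Rightarrow> complex" and P :: "complex poly"
  assumes W: "\<And>i j. i < N \<Longrightarrow> j < N \<Longrightarrow> i \<noteq> j \<Longrightarrow> poly P (w i / w j) = 0"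
    and nz: "\<And>j. j < N \<Longrightarrow> w j \<noteq> 0" and P1: "poly P 1 \<noteq> 0" and P0: "P \<noteq> 0"
    and ab: "a < N" "b < N" "norm (w a) \<noteq> norm (w b)"
  shows "card {x. poly P x = 0 \<and> norm x \<noteq> 1} \<ge> N"
proof -
  define f where "f j = norm (w j)" for j
  define rmin where "rmin = Min (f ` {..<N})"
  define rmax where "rmax = Max (f ` {..<N})"
  have ne: "f ` {..<N} \<noteq> {}" using ab by auto
  obtain m where m: "m < N" "f m = rmin" using Min_in[OF _ ne] unfolding rmin_def by auto
  obtain M where M: "M < N" "f M = rmax" using Max_in[OF _ ne] unfolding rmax_def by auto
  have minle: "rmin \<le> f j" if "j < N" for j unfolding rmin_def using that by (intro Min_le) auto
  have maxge: "f j \<le> rmax" if "j < N" for j unfolding rmax_def using that by (intro Max_ge) auto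
  have lt: "rmin < rmax"
  proof (rule ccontr)
    assume "\<not> rmin < rmax"
    then have "f a = f b" using minle maxge ab(1,2) by (meson antisym le_less_trans not_le order_trans)
    then show False using ab(3) by (simp add: f_def)
  qed
  have rpos: "rmin > 0" using m nz by (auto simp: f_def)
  define h where "h i = (if f i > rmin then w i / w m else w i / w M)" for i
  define S where "S = {x. poly P x = 0 \<and> norm x \<noteq> 1}"
  have Sfin: "finite S" unfolding S_def using poly_roots_finite[OF P0] by (rule finite_subset[rotated]) auto
  have distinct: "w i \<noteq> w j" if "i < N" "j < N" "i \<noteq> j" for i j
  proof
    assume "w i = w j"
    then have "w i / w j = 1" using nz that by simp
    then show False using W[OF that] P1 by simp
  qed
  have normh1: "norm (h i) > 1" if "i < N" "f i > rmin" for i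
    using that m nz[of m] rpos by (simp add: h_def norm_divide f_def)
  have normh2: "norm (h i) < 1" if "i < N" "\<not> f i > rmin" for i
  proof -
    have "f i = rmin" using that minle by force
    then show ?thesis using that M lt rpos by (simp add: h_def norm_divide f_def)
  qed
  have hS: "h i \<in> S" if "i < N" for i
  proof (cases "f i > rmin")
    case True
    then have "i \<noteq> m" using m by auto
    then show ?thesis using W[OF that m(1)] normh1[OF that True] True by (simp add: S_def h_def)
  next
    case False
    then have "f i = rmin" using that minle by force
    then have "i \<noteq> M" using M lt by auto
    then show ?thesis using W[OF that M(1)] normh2[OF that False] False by (simp add: S_def h_def)
  qed
  have inj: "inj_on h {..<N}"
  proof (rule inj_onI)
    fix i j assume i: "i \<in> {..<N}" and j: "j \<in> {..<N}" and e: "h i = h j"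
    show "i = j"
    proof (rule ccontr)
      assume ij: "i \<noteq> j"
      consider "f i > rmin" "f j > rmin" | "\<not> f i > rmin" "\<not> f j > rmin"
        | "f i > rmin" "\<not> f j > rmin" | "\<not> f i > rmin" "f j > rmin" by blast
      then show False
      proof cases
        case 1
        then have "w i = w j" using e nz[of m] m by (simp add: h_def)
        then show False using distinct i j ij by auto
      next
        case 2
        then have "w i = w j" using e nz[of M] M by (simp add: h_def)
        then show False using distinct i j ij by auto
      next
        case 3
        then show False using normh1[of i] normh2[of j] i j e by auto
      next
        case 4
        then show False using normh1[of j] normh2[of i] i j e by auto
      qed
    qed
  qed
  have "N = card (h ` {..<N})" using card_image[OF inj] by simp
  also have "\<dots> \<le> card S" using hS Sfin by (intro card_mono) auto
  finally show ?thesis by (simp add: S_def)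
qed



lemma set_poly_coeff: "finite A \<Longrightarrow> coeff (set_poly A) i = (if i \<in> A then 1 else 0)"
  by (simp add: set_poly_def coeff_sum coeff_monom)

lemma set_poly_poly: "poly (set_poly A) x = (\<Sum>a\<in>A. x ^ a)"
  by (simp add: set_poly_def poly_sum poly_monom)

lemma set_poly_lead: assumes "finite A" "A \<noteq> {}" shows "lead_coeff (set_poly A) = 1"
proof -
  have c: "coeff (set_poly A) (Max A) = 1" using assms by (simp add: set_poly_coeff)
  have "coeff (set_poly A) i = 0" if "i > Max A" for i
    using assms that Max_ge[OF assms(1)] by (auto simp: set_poly_coeff)
  then have "degree (set_poly A) \<le> Max A" by (meson degree_le)
  moreover have "Max A \<le> degree (set_poly A)" using c by (simp add: le_degree)
  ultimately show ?thesis using c by simp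
qed

lemma cis_eq_1_rat: assumes "cis x = 1" shows "\<exists>m::int. x = 2 * pi * m"
proof -
  have "cos x = 1" using assms by (metis cis.sel(1) one_complex.sel(1))
  then obtain n :: int where "x = of_int n * 2 * pi" using cos_one_2pi_int by blast
  then show ?thesis by (intro exI[of _ n]) simp
qed

theorem mainTheorem10:
  fixes A :: "nat set" and \<theta> :: "nat \<Rightarrow> real"
  assumes "finite A" and "0 \<in> A" and "card A \<ge> 2"
    and "is_spectrum A \<theta>"
    and "\<theta> 1 \<notin> \<rat>"
  shows "card {x :: complex. poly (set_poly A) x = 0 \<and> norm x \<noteq> 1} \<ge> card A - 1"
proof -
  define P where "P = set_poly A"
  define N where "N = card A"
  define th where "th = \<theta>(0 := 0)"
  define z where "z j = cis (2 * pi * th j)" for j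
  have An: "A \<noteq> {}" using assms(2) by auto
  have Pint: "\<forall>i. coeff P i \<in> \<int>" using assms(1) by (simp add: P_def set_poly_coeff)
  have Pm: "lead_coeff P = 1" using set_poly_lead[OF assms(1) An] by (simp add: P_def)
  have P0: "P \<noteq> 0" using Pm by auto
  have P1: "poly P 1 \<noteq> 0" using assms(1,3) An by (simp add: P_def set_poly_poly)
  have PQ: "kpoly \<rat> P" using Pint Ints_sub_Rats by (auto simp: kpoly_def)
  have spec: "\<And>i j. i < N \<Longrightarrow> j < N \<Longrightarrow> i \<noteq> j \<Longrightarrow> poly P (cis (2 * pi * (th i - th j))) = 0"
    using assms(4) unfolding is_spectrum_def Let_def P_def N_def th_def by blast
  have zr: "poly P (z i / z j) = 0" if "i < N" "j < N" "i \<noteq> j" for i j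
  proof -
    have "z i / z j = cis (2 * pi * (th i - th j))" by (simp add: z_def cis_divide right_diff_distrib)
    then show ?thesis using spec[OF that] by simp
  qed
  have z0: "z 0 = 1" by (simp add: z_def th_def)
  have znz: "z j \<noteq> 0" for j by (simp add: z_def)
  have N2: "N \<ge> 2" using assms(3) N_def by simp
  have zroot: "poly P (z j) = 0" if "0 < j" "j < N" for j
    using zr[OF that(2), of 0] that N2 z0 by simp
  have z1: "z 1 = cis (2 * pi * \<theta> 1)" by (simp add: z_def th_def)
  have Pz1: "poly P (z 1) = 0" using zroot[of 1] N2 by simp
  have "alg_over \<rat> (z 1)" using PQ P0 Pz1 by (auto simp: alg_over_def)
  then obtain mp where mp: "ismin \<rat> (z 1) mp" using min_exists by blast
  have "\<not> (\<forall>u. poly mp u = 0 \<longrightarrow> norm u \<le> 1)"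
  proof
    assume "\<forall>u. poly mp u = 0 \<longrightarrow> norm u \<le> 1"
    from kronecker[OF Pint Pm Pz1 znz mp this] obtain k :: nat where k: "k > 0" "z 1 ^ k = 1" by blast
    have "cis (real k * (2 * pi * \<theta> 1)) = cis (2 * pi * \<theta> 1) ^ k" by (rule Complex.DeMoivre[symmetric])
    then have "cis (real k * (2 * pi * \<theta> 1)) = 1" using k(2) z1 by simp
    then obtain m :: int where "real k * (2 * pi * \<theta> 1) = 2 * pi * m" using cis_eq_1_rat by blast
    then have "\<theta> 1 = of_int m / real k" using k(1) by (simp add: field_simps)
    then have "\<theta> 1 \<in> \<rat>" by simp
    then show False using assms(5) by simp
  qed
  then obtain wv where wv: "poly mp wv = 0" "norm wv > 1" by (auto simp: not_le)
  obtain xs where xs: "set xs = {u. poly P u = 0}" using finite_list[OF poly_roots_finite[OF P0]] by blast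
  have "\<forall>x\<in>set xs. alg_over \<rat> x" using xs PQ P0 by (auto simp: alg_over_def)
  from emb_conj[OF mp wv(1) this] obtain K \<sigma> where
    e: "sfield K" "emb K \<sigma>" "z 1 \<in> K" "set xs \<subseteq> K" "\<sigma> (z 1) = wv" by blast
  have rootK: "x \<in> K" if "poly P x = 0" for x using that xs e(4) by auto
  have zK: "z j \<in> K" if "j < N" for j
  proof (cases "j = 0")
    case True then show ?thesis using z0 sf1[OF e(1)] by simp
  next
    case False then show ?thesis using rootK zroot that by simp
  qed
  define w where "w j = \<sigma> (z j)" for j
  have wr: "poly P (w i / w j) = 0" if "i < N" "j < N" "i \<noteq> j" for i j
  proof -
    have "w i / w j = \<sigma> (z i / z j)" unfolding w_def using emb_div[OF e(1,2) zK zK] that by simp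
    also have "poly P \<dots> = \<sigma> (poly P (z i / z j))"
      using emb_poly_Rats[OF e(1,2) PQ rootK[OF zr[OF that]]] by simp
    also have "\<dots> = 0" using zr[OF that] emb0[OF e(1,2)] by simp
    finally show ?thesis .
  qed
  have wnz: "w j \<noteq> 0" if "j < N" for j
    using emb_eq0[OF e(1,2) zK[OF that]] znz unfolding w_def by blast
  have "norm (w 0) \<noteq> norm (w 1)" using wv(2) e(5) emb1[OF e(2)] z0 by (simp add: w_def)
  then have "card {x. poly P x = 0 \<and> norm x \<noteq> 1} \<ge> N"
    using count_lemma[of N P w 0 1] wr wnz P1 P0 N2 by auto
  then show ?thesis by (simp add: P_def N_def)
qed


end
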